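(* Let $A,B\in\mathbb{C}^{n\times n}$ with $A$ diagonalizable and $\operatorname{rank}(B)=1$, and let $C=A+B$. If $C$ is diagonalizable, then $|\Lambda(C)|\leq 2|\Lambda(A)|$. If $C$ is not diagonalizable, then $|\Lambda(C)|\leq 2|\Lambda(A)|-1$.
   Context: For $M\in\mathbb{C}^{n\times n}$, $\Lambda(M)$ denotes the set of distinct eigenvalues of $M$ and $|\cdot|$ the cardinality of a set. *)

theory Defs
  imports "Jordan_Normal_Form.Spectral_Radius" "Jordan_Normal_Form.DL_Rank"
begin

definition diagonalizable :: "'a :: semiring_1 mat \<Rightarrow> bool" where
  "diagonalizable A \<longleftrightarrow> (\<exists>D. diagonal_mat D \<and> similar_mat A D)"

end

theory Submission
  imports Defs "Jordan_Normal_Form.Jordan_Normal_Form_Uniqueness"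
begin
lemma rank_nullity_mat:
  fixes A :: "'a::field mat"
  assumes A: "A \<in> carrier_mat nr nc"
  shows "vec_space.rank nr A + kernel_dim A = nc"
proof -
  interpret V: vec_space "TYPE('a)" nc .
  interpret W: vec_space "TYPE('a)" nr .
  interpret K: kernel nr nc A by unfold_locales (rule A)
  interpret L: linear_map class_ring "module_vec TYPE('a) nc" "module_vec TYPE('a) nr" "\<lambda>v. A *\<^sub>v v"
  proof (unfold_locales)
    show "(\<lambda>v. A *\<^sub>v v) \<in> module_hom class_ring (module_vec TYPE('a) nc) (module_vec TYPE('a) nr)"
      unfolding module_hom_def using A
      by (auto simp: module_vec_simps class_ring_simps mult_add_distrib_mat_vec mult_mat_vec)
  qed
  have rn: "vectorspace.dim class_ring (W.vs L.im) + vectorspace.dim class_ring (V.vs L.ker) = V.dim"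
    by (rule L.rank_nullity[OF V.fin_dim])
  have im: "L.im = W.col_space A"
    unfolding L.im_def W.col_space_eq[OF A] using A by (auto simp: module_vec_simps)
  have ker: "L.ker = mat_kernel A"
    unfolding L.ker_def mat_kernel_def using A by (auto simp: module_vec_simps)
  show ?thesis using rn unfolding im ker W.rank_def W.col_space_def V.dim_is_n
    using A by simp
qed

lemma kernel_dim_rank1:
  fixes X B :: "'a::field mat"
  assumes X: "X \<in> carrier_mat n n" and B: "B \<in> carrier_mat n n"
    and r: "vec_space.rank n B \<le> 1"
  shows "kernel_dim X \<le> kernel_dim (X + B) + 1"
proof -
  have XB: "X + B \<in> carrier_mat n n" using X B by simp
  have "vec_space.rank n (X + B) \<le> vec_space.rank n X + vec_space.rank n B"
    by (rule vec_space.rank_subadditive[OF X B])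
  with rank_nullity_mat[OF X] rank_nullity_mat[OF XB] r show ?thesis by linarith
qed

lemma char_matrix_add:
  assumes A: "A \<in> carrier_mat n n" and B: "B \<in> carrier_mat n n"
  shows "char_matrix (A + B) e = char_matrix A e + B"
  unfolding char_matrix_def using A B by (intro eq_matI, auto)

lemma poly_jordan_root:
  "poly (\<Prod>(n, a)\<leftarrow>n_as. [:- a, 1:] ^ n) (k::'a::idom) = 0 \<longleftrightarrow> (\<exists>(n,a)\<in>set n_as. n \<noteq> 0 \<and> a = k)"
  by (induct n_as, auto)

lemma spectrum_jnf:
  fixes A :: "'a::field mat"
  assumes A: "A \<in> carrier_mat n n" and j: "jordan_nf A n_as"
  shows "spectrum A = snd ` set n_as"
proof -
  from j have z: "0 \<notin> fst ` set n_as" and cp: "char_poly A = (\<Prod>(n, a)\<leftarrow>n_as. [:- a, 1:] ^ n)"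
    using jordan_nf_char_poly[OF j] unfolding jordan_nf_def by auto
  show ?thesis unfolding spectrum_root_char_poly[OF A] cp poly_jordan_root using z
    by (force simp: image_iff)
qed

lemma sum_min1: "(\<forall>x\<in>set xs. x \<noteq> 0) \<Longrightarrow> (\<Sum>n\<leftarrow>xs. min 1 n) = length (xs::nat list)"
  by (induct xs, auto)

lemma kernel_dim_jnf:
  fixes A :: "'a::field mat"
  assumes A: "A \<in> carrier_mat n n" and j: "jordan_nf A n_as"
  shows "kernel_dim (char_matrix A e) = count_list (map snd n_as) e"
proof -
  from j have z: "0 \<notin> fst ` set n_as" unfolding jordan_nf_def by auto
  have "kernel_dim (char_matrix A e) = dim_gen_eigenspace A e 1"
    unfolding dim_gen_eigenspace_def using A by simp
  also have "\<dots> = (\<Sum> n \<leftarrow> map fst [(n, e')\<leftarrow>n_as . e' = e]. min 1 n)"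
    by (rule dim_gen_eigenspace[OF j])
  also have "\<dots> = length [(n, e')\<leftarrow>n_as . e' = e]"
    by (subst sum_min1, insert z, force, simp)
  also have "\<dots> = count_list (map snd n_as) e"
    by (induct n_as, auto)
  finally show ?thesis .
qed

lemma sum_fst_ones: "sum_list (map fst (map (\<lambda>d. (1::nat, d)) ds)) = length ds"
  by (induct ds, auto)

lemma jordan_matrix_ones:
  "jordan_matrix (map (\<lambda>d. (1::nat, d)) ds) = mat (length ds) (length ds) (\<lambda>(i,j). if i = j then ds!i else (0::'a::{zero,one}))"
proof (induct ds)
  case Nil
  show ?case by (intro eq_matI, auto)
next
  case (Cons d ds)
  show ?case unfolding list.map(2) jordan_matrix_Cons sum_fst_ones Cons
    by (intro eq_matI, auto simp: nth_Cons')
qed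

lemma diag_mat_eq:
  assumes D: "D \<in> carrier_mat n n" and d: "diagonal_mat D"
  shows "D = mat n n (\<lambda>(i,j). if i = j then map (\<lambda>i. D $$ (i,i)) [0..<n] ! i else 0)"
  using D d unfolding diagonal_mat_def by (intro eq_matI, auto)

lemma diagonalizable_jnf:
  assumes j: "jordan_nf C cs" and ones: "\<forall>x\<in>set cs. fst x = 1"
  shows "diagonalizable C"
proof -
  have cs: "cs = map (\<lambda>d. (1::nat, d)) (map snd cs)"
    using ones by (induct cs, auto)
  define ds where "ds = map snd cs"
  have "similar_mat C (jordan_matrix (map (\<lambda>d. (1::nat, d)) ds))"
    using j cs unfolding jordan_nf_def ds_def by auto
  moreover have "diagonal_mat (jordan_matrix (map (\<lambda>d. (1::nat, d)) ds))"
    unfolding jordan_matrix_ones diagonal_mat_def by auto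
  ultimately show ?thesis unfolding diagonalizable_def by blast
qed

lemma jnf_diagonalizable:
  fixes A :: "'a::field mat"
  assumes A: "A \<in> carrier_mat n n" and d: "diagonalizable A"
  shows "\<exists>ds. length ds = n \<and> jordan_nf A (map (\<lambda>d. (1::nat, d)) ds)"
proof -
  from d obtain D where dD: "diagonal_mat D" and s: "similar_mat A D" unfolding diagonalizable_def by auto
  from similar_matD[OF s] A have D: "D \<in> carrier_mat n n" by auto
  define ds where "ds = map (\<lambda>i. D $$ (i,i)) [0..<n]"
  have "D = jordan_matrix (map (\<lambda>d. (1::nat, d)) ds)"
    unfolding jordan_matrix_ones ds_def using diag_mat_eq[OF D dD] by simp
  with s have "jordan_nf A (map (\<lambda>d. (1::nat, d)) ds)" unfolding jordan_nf_def by auto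
  thus ?thesis unfolding ds_def by (intro exI[of _ ds], auto simp: ds_def)
qed

lemma count_bound:
  assumes le: "\<And>e. count_list ds e \<le> count_list es e + 1"
  shows "card (set es) + length ds \<le> length es + 2 * card (set ds)"
proof -
  define m where "m = count_list ds"
  define g where "g = count_list es"
  define S where "S = {e\<in>set ds. 2 \<le> m e}"
  have S_sub: "S \<subseteq> set es"
  proof
    fix e assume "e \<in> S"
    hence "2 \<le> m e" unfolding S_def by auto
    with le[of e] have "g e \<noteq> 0" unfolding m_def g_def by auto
    thus "e \<in> set es" unfolding g_def by (simp add: count_list_0_iff)
  qed
  have fS: "finite S" unfolding S_def by auto
  have cardS: "card S \<le> card (set ds)" unfolding S_def by (rule card_mono, auto)
  have len_es: "length es = sum g (set es)" unfolding g_def by (rule sum_count_set[symmetric], auto)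
  have split: "sum g (set es) = sum g S + sum g (set es - S)"
    using sum.subset_diff[OF S_sub finite_set, of g] by simp
  have ge1: "card (set es - S) \<le> sum g (set es - S)"
  proof -
    have "card (set es - S) = (\<Sum>e\<in>set es - S. 1::nat)" by simp
    also have "\<dots> \<le> sum g (set es - S)"
      by (rule sum_mono, auto simp: g_def Suc_le_eq, metis count_list_0_iff gr0I)
    finally show ?thesis .
  qed
  have cd: "card (set es - S) = card (set es) - card S"
    using S_sub fS by (simp add: card_Diff_subset)
  have cS: "card S \<le> card (set es)" using S_sub by (simp add: card_mono)
  have gS: "(\<Sum>e\<in>S. m e - 1) \<le> sum g S"
    by (rule sum_mono, unfold m_def g_def, metis le diff_le_mono add_diff_cancel_right')
  have sS: "(\<Sum>e\<in>S. m e - 1) = (\<Sum>e\<in>set ds. m e - 1)"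
  proof (rule sum.mono_neutral_left)
    show "\<forall>i\<in>set ds - S. m i - 1 = 0" unfolding S_def by auto
  qed (auto simp: S_def)
  have sd: "(\<Sum>e\<in>set ds. m e - 1) + card (set ds) = length ds"
  proof -
    have "(\<Sum>e\<in>set ds. m e - 1) + card (set ds) = (\<Sum>e\<in>set ds. m e - 1 + 1)"
      using sum.distrib[of "\<lambda>e. m e - 1" "\<lambda>e. 1" "set ds"] by simp
    also have "\<dots> = (\<Sum>e\<in>set ds. m e)"
    proof (rule sum.cong)
      fix e assume "e \<in> set ds"
      hence "m e \<noteq> 0" unfolding m_def by (simp add: count_list_0_iff)
      thus "m e - 1 + 1 = m e" by simp
    qed simp
    also have "\<dots> = length ds" unfolding m_def by (rule sum_count_set, auto)
    finally show ?thesis .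
  qed
  show ?thesis using len_es split ge1 cd cS gS sS sd cardS by linarith
qed

lemma sum_list_ge_length:
  "\<forall>x\<in>set xs. (x::nat) \<noteq> 0 \<Longrightarrow> length xs \<le> sum_list xs"
  by (induct xs, auto)

lemma sum_list_ge_length_strict:
  "\<forall>x\<in>set xs. (x::nat) \<noteq> 0 \<Longrightarrow> \<exists>x\<in>set xs. x \<noteq> 1 \<Longrightarrow> length xs + 1 \<le> sum_list xs"
proof (induct xs)
  case (Cons a xs)
  show ?case
  proof (cases "a = 1")
    case True
    with Cons show ?thesis by auto
  next
    case False
    with Cons.prems have "2 \<le> a" by auto
    with sum_list_ge_length[of xs] Cons.prems show ?thesis by auto
  qed
qed simp

theorem corollary4p2:
  fixes A B C :: "complex mat" and n :: nat
  assumes A: "A \<in> carrier_mat n n" and B: "B \<in> carrier_mat n n"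
    and diagA: "diagonalizable A"
    and rankB: "vec_space.rank n B = 1"
    and C: "C = A + B"
  shows "(diagonalizable C \<longrightarrow> card (spectrum C) \<le> 2 * card (spectrum A))
       \<and> (\<not> diagonalizable C \<longrightarrow> card (spectrum C) \<le> 2 * card (spectrum A) - 1)"
proof -
  have Cc: "C \<in> carrier_mat n n" using A B C by simp
  from jnf_diagonalizable[OF A diagA] obtain ds where
    lds: "length ds = n" and jA: "jordan_nf A (map (\<lambda>d. (1::nat, d)) ds)" by auto
  from char_poly_factorized[OF Cc] obtain as where "char_poly C = (\<Prod> a \<leftarrow> as. [:- a, 1:])" by auto
  from jordan_nf_exists[OF Cc this] obtain cs where jC: "jordan_nf C cs" by auto
  define es where "es = map snd cs"
  have specA: "spectrum A = set ds" using spectrum_jnf[OF A jA] by (simp add: image_image)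
  have specC: "spectrum C = set es" using spectrum_jnf[OF Cc jC] unfolding es_def by simp
  have le: "count_list ds e \<le> count_list es e + 1" for e
  proof -
    have X: "char_matrix A e \<in> carrier_mat n n" using A by simp
    have "kernel_dim (char_matrix A e) \<le> kernel_dim (char_matrix A e + B) + 1"
      by (rule kernel_dim_rank1[OF X B], simp add: rankB)
    also have "char_matrix A e + B = char_matrix C e" unfolding C by (rule char_matrix_add[OF A B, symmetric])
    finally show ?thesis unfolding kernel_dim_jnf[OF A jA, of e] kernel_dim_jnf[OF Cc jC, of e] es_def
      by (simp add: comp_def)
  qed
  from count_bound[OF le] have cb: "card (set es) + n \<le> length es + 2 * card (set ds)" using lds by simp
  from jC have z: "\<forall>x\<in>set (map fst cs). x \<noteq> 0" unfolding jordan_nf_def by force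
  from jC have "similar_mat C (jordan_matrix cs)" unfolding jordan_nf_def by auto
  from similar_matD[OF this] Cc have "jordan_matrix cs \<in> carrier_mat n n" by auto
  hence nsum: "sum_list (map fst cs) = n" by auto
  have lcs: "length es \<le> n" using sum_list_ge_length[OF z] nsum unfolding es_def by simp
  show ?thesis
  proof (intro conjI impI)
    show "card (spectrum C) \<le> 2 * card (spectrum A)" unfolding specA specC using cb lcs by linarith
  next
    assume nd: "\<not> diagonalizable C"
    have "\<exists>x\<in>set (map fst cs). x \<noteq> 1"
      using diagonalizable_jnf[OF jC] nd by auto
    from sum_list_ge_length_strict[OF z this] nsum have "length es + 1 \<le> n" unfolding es_def by simp
    thus "card (spectrum C) \<le> 2 * card (spectrum A) - 1" unfolding specA specC using cb by linarith
  qed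
qed

end
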